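(* Let $\mathfrak{G}$ be a compactly generated groupoid of germs. Then for every compact topological transversal $X\subset\mathfrak{G}^{(0)}$ there exists a compact set $S\subset\mathfrak{G}|_X$ such that $(S,X)$ is a compact generating pair of $\mathfrak{G}$.
   Context: $\mathfrak{G}$ is the groupoid of germs of a pseudogroup of homeomorphisms between open subsets of a locally compact metrizable space $\mathfrak{G}^{(0)}$ (germs $(F,x)$ with $\mathsf{o}(F,x)=x$, $\mathsf{t}(F,x)=F(x)$, germ topology). For $A\subset\mathfrak{G}^{(0)}$, $\mathfrak{G}|_A=\{g:\mathsf{o}(g),\mathsf{t}(g)\in A\}$. A set $X\subset\mathfrak{G}^{(0)}$ is a topological transversal if it contains an open set meeting every $\mathfrak{G}$-orbit. A compact generating pair is a pair $(S,X)$ of compact sets $S\subset\mathfrak{G}$, $X\subset\mathfrak{G}^{(0)}$, with $X$ a topological transversal, such that for every $g\in\mathfrak{G}|_X$ there is $n$ such that $\bigcup_{k=1}^n(S\cup S^{-1})^k$ is a neighborhood of $g$ in $\mathfrak{G}|_X$. $\mathfrak{G}$ is compactly generated if it has a compact generating pair. *)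

theory Defs
  imports "HOL-Analysis.Analysis"
begin

text \<open>The unit space G^(0) is the whole carrier of a metric-space type 'a (hence metrizable);
local compactness is assumed separately.\<close>

definition partial_homeo :: "('a::topological_space \<Rightarrow> 'a) \<Rightarrow> 'a set \<Rightarrow> bool" where
  "partial_homeo f U \<longleftrightarrow> open U \<and> open (f ` U) \<and> inj_on f U \<and> continuous_on U f
      \<and> continuous_on (f ` U) (inv_into U f)"

definition pseudogroup :: "(('a::topological_space \<Rightarrow> 'a) \<times> 'a set) set \<Rightarrow> bool" where
  "pseudogroup P \<longleftrightarrow>
     (\<forall>(f,U)\<in>P. partial_homeo f U)
   \<and> (id, UNIV) \<in> P
   \<and> (\<forall>f U V. (f,U) \<in> P \<longrightarrow> open V \<longrightarrow> V \<subseteq> U \<longrightarrow> (f,V) \<in> P)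
   \<and> (\<forall>f U g V. (f,U) \<in> P \<longrightarrow> (g,V) \<in> P \<longrightarrow> (g \<circ> f, U \<inter> f -` V) \<in> P)
   \<and> (\<forall>f U. (f,U) \<in> P \<longrightarrow> (inv_into U f, f ` U) \<in> P)
   \<and> (\<forall>f U. partial_homeo f U \<longrightarrow>
        (\<forall>x\<in>U. \<exists>W. open W \<and> x \<in> W \<and> W \<subseteq> U \<and> (f,W) \<in> P) \<longrightarrow> (f,U) \<in> P)"

text \<open>A germ is represented by its base point together with the class of all maps
agreeing with a representative on a neighbourhood of the base point.\<close>

type_synonym 'a germ = "'a \<times> ('a \<Rightarrow> 'a) set"

definition germ_of :: "('a::topological_space \<Rightarrow> 'a) \<Rightarrow> 'a \<Rightarrow> 'a germ" where
  "germ_of f x = (x, {g. \<exists>V. open V \<and> x \<in> V \<and> (\<forall>y\<in>V. g y = f y)})"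

definition germs :: "(('a::topological_space \<Rightarrow> 'a) \<times> 'a set) set \<Rightarrow> 'a germ set" where
  "germs P = {germ_of f x | f U x. (f,U) \<in> P \<and> x \<in> U}"

definition gsrc :: "'a germ \<Rightarrow> 'a" where
  "gsrc g = fst g"

definition gtgt :: "'a germ \<Rightarrow> 'a" where
  "gtgt g = (SOME f. f \<in> snd g) (fst g)"

definition germ_top :: "(('a::topological_space \<Rightarrow> 'a) \<times> 'a set) set \<Rightarrow> 'a germ topology" where
  "germ_top P = topology_generated_by {{germ_of f x | x. x \<in> U} | f U. (f,U) \<in> P}"

definition restr :: "(('a::topological_space \<Rightarrow> 'a) \<times> 'a set) set \<Rightarrow> 'a set \<Rightarrow> 'a germ set" where
  "restr P A = {g \<in> germs P. gsrc g \<in> A \<and> gtgt g \<in> A}"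

text \<open>Product of sets of germs: A B = {a b | ...}, where b is applied first
(so origin of a = target of b).\<close>
definition gmul :: "(('a::topological_space \<Rightarrow> 'a) \<times> 'a set) set \<Rightarrow> 'a germ set \<Rightarrow> 'a germ set \<Rightarrow> 'a germ set" where
  "gmul P A B = {germ_of (f \<circ> k) x | f U k V x. (f,U) \<in> P \<and> (k,V) \<in> P \<and> x \<in> V \<and> k x \<in> U
                   \<and> germ_of f (k x) \<in> A \<and> germ_of k x \<in> B}"

definition ginv :: "(('a::topological_space \<Rightarrow> 'a) \<times> 'a set) set \<Rightarrow> 'a germ set \<Rightarrow> 'a germ set" where
  "ginv P A = {germ_of (inv_into U f) (f x) | f U x. (f,U) \<in> P \<and> x \<in> U \<and> germ_of f x \<in> A}"

primrec gpow :: "(('a::topological_space \<Rightarrow> 'a) \<times> 'a set) set \<Rightarrow> 'a germ set \<Rightarrow> nat \<Rightarrow> 'a germ set" where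
  "gpow P A 0 = {germ_of id x | x. True}"
| "gpow P A (Suc k) = gmul P A (gpow P A k)"

definition top_transversal :: "(('a::topological_space \<Rightarrow> 'a) \<times> 'a set) set \<Rightarrow> 'a set \<Rightarrow> bool" where
  "top_transversal P X \<longleftrightarrow>
     (\<exists>V. open V \<and> V \<subseteq> X \<and> (\<forall>x. \<exists>g\<in>germs P. gsrc g = x \<and> gtgt g \<in> V))"

definition compact_generating_pair ::
  "(('a::topological_space \<Rightarrow> 'a) \<times> 'a set) set \<Rightarrow> 'a germ set \<Rightarrow> 'a set \<Rightarrow> bool" where
  "compact_generating_pair P S X \<longleftrightarrow>
     S \<subseteq> germs P \<and> compactin (germ_top P) S \<and> compact X \<and> top_transversal P X
   \<and> (\<forall>g\<in>restr P X. \<exists>n. \<exists>W. openin (subtopology (germ_top P) (restr P X)) W \<and> g \<in> W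
          \<and> W \<subseteq> (\<Union>k\<in>{1..n}. gpow P (S \<union> ginv P S) k))"

definition compactly_generated :: "(('a::topological_space \<Rightarrow> 'a) \<times> 'a set) set \<Rightarrow> bool" where
  "compactly_generated P \<longleftrightarrow> (\<exists>S X. compact_generating_pair P S X)"

end

theory Submission
  imports Defs
begin



lemma germ_of_eq_iff:
  "germ_of f x = germ_of g y \<longleftrightarrow> x = y \<and> (\<forall>\<^sub>F z in nhds x. f z = g z)"
proof
  assume h: "germ_of f x = germ_of g y"
  hence xy: "x = y" by (simp add: germ_of_def)
  have "f \<in> snd (germ_of f x)" unfolding germ_of_def by auto
  hence "f \<in> snd (germ_of g y)" using h by simp
  then obtain V where "open V" "y \<in> V" "\<forall>z\<in>V. f z = g z" unfolding germ_of_def by auto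
  thus "x = y \<and> (\<forall>\<^sub>F z in nhds x. f z = g z)" using xy eventually_nhds by blast
next
  assume h: "x = y \<and> (\<forall>\<^sub>F z in nhds x. f z = g z)"
  then obtain V where V: "open V" "x \<in> V" "\<forall>z\<in>V. f z = g z" using eventually_nhds by blast
  have "{h. \<exists>V. open V \<and> x \<in> V \<and> (\<forall>y\<in>V. h y = f y)} = {h. \<exists>V. open V \<and> x \<in> V \<and> (\<forall>y\<in>V. h y = g y)}"
  proof (intro set_eqI iffI; clarsimp)
    fix h W assume "open W" "x \<in> W" "\<forall>y\<in>W. h y = f y"
    thus "\<exists>V. open V \<and> x \<in> V \<and> (\<forall>y\<in>V. h y = g y)" using V by (intro exI[of _ "W \<inter> V"]) auto
  next
    fix h W assume "open W" "x \<in> W" "\<forall>y\<in>W. h y = g y"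
    thus "\<exists>V. open V \<and> x \<in> V \<and> (\<forall>y\<in>V. h y = f y)" using V by (intro exI[of _ "W \<inter> V"]) auto
  qed
  thus "germ_of f x = germ_of g y" using h unfolding germ_of_def by simp
qed

lemma germ_eqI: "\<forall>\<^sub>F z in nhds x. f z = g z \<Longrightarrow> germ_of f x = germ_of g x"
  by (simp add: germ_of_eq_iff)

lemma germ_eqD: "germ_of f x = germ_of g x \<Longrightarrow> \<forall>\<^sub>F z in nhds x. f z = g z"
  by (simp add: germ_of_eq_iff)

lemma gsrc_germ[simp]: "gsrc (germ_of f x) = x" by (simp add: gsrc_def germ_of_def)

lemma gtgt_germ[simp]: "gtgt (germ_of f x) = f x"
proof -
  have ex: "\<exists>h. h \<in> snd (germ_of f x)" unfolding germ_of_def by auto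
  have "(SOME h. h \<in> snd (germ_of f x)) \<in> snd (germ_of f x)" using someI_ex[OF ex] .
  then obtain V where "x \<in> V" "\<forall>y\<in>V. (SOME h. h \<in> snd (germ_of f x)) y = f y"
    unfolding germ_of_def by auto
  thus ?thesis unfolding gtgt_def by (simp add: germ_of_def)
qed

lemma ev_nhds_open: "open S \<Longrightarrow> x \<in> S \<Longrightarrow> (\<And>z. z \<in> S \<Longrightarrow> Q z) \<Longrightarrow> \<forall>\<^sub>F z in nhds x. Q z"
  using eventually_nhds by blast

lemma germ_rep: assumes "h \<in> snd (germ_of f x)" shows "germ_of h x = germ_of f x"
proof -
  obtain V where "open V" "x \<in> V" "\<forall>y\<in>V. h y = f y" using assms unfolding germ_of_def by auto
  thus ?thesis by (intro germ_eqI ev_nhds_open[of V]) auto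
qed

lemma germ_some: "germ_of (SOME h. h \<in> snd (germ_of f x)) x = germ_of f x"
proof -
  have ex: "\<exists>h. h \<in> snd (germ_of f x)" unfolding germ_of_def by auto
  show ?thesis using germ_rep[OF someI_ex[OF ex]] .
qed

lemma ev_nhds_point: "\<forall>\<^sub>F z in nhds x. Q z \<Longrightarrow> Q x"
  using eventually_nhds by blast

lemma ev_comp:
  assumes "\<forall>\<^sub>F z in nhds y. Q z" "continuous_on R r" "open R" "x \<in> R" "r x = y"
  shows "\<forall>\<^sub>F z in nhds x. Q (r z)"
proof -
  obtain S where S: "open S" "y \<in> S" "\<forall>z\<in>S. Q z" using assms(1) eventually_nhds by blast
  have "open (R \<inter> r -` S)" using assms(2,3) S(1) continuous_open_preimage by blast
  thus ?thesis using S assms by (intro ev_nhds_open[of "R \<inter> r -` S"]) auto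
qed




locale pg =
  fixes P :: "(('a::metric_space \<Rightarrow> 'a) \<times> 'a set) set"
  assumes pgP: "pseudogroup P"
begin

lemma pg_all: "(\<forall>(f,U)\<in>P. partial_homeo f U)
   \<and> (id, UNIV) \<in> P
   \<and> (\<forall>f U V. (f,U) \<in> P \<longrightarrow> open V \<longrightarrow> V \<subseteq> U \<longrightarrow> (f,V) \<in> P)
   \<and> (\<forall>f U g V. (f,U) \<in> P \<longrightarrow> (g,V) \<in> P \<longrightarrow> (g \<circ> f, U \<inter> f -` V) \<in> P)
   \<and> (\<forall>f U. (f,U) \<in> P \<longrightarrow> (inv_into U f, f ` U) \<in> P)
   \<and> (\<forall>f U. partial_homeo f U \<longrightarrow>
        (\<forall>x\<in>U. \<exists>W. open W \<and> x \<in> W \<and> W \<subseteq> U \<and> (f,W) \<in> P) \<longrightarrow> (f,U) \<in> P)"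
  using pgP unfolding pseudogroup_def .

lemmas pg_parts = pg_all[THEN conjunct1] pg_all[THEN conjunct2, THEN conjunct1]
  pg_all[THEN conjunct2, THEN conjunct2, THEN conjunct1]
  pg_all[THEN conjunct2, THEN conjunct2, THEN conjunct2, THEN conjunct1]
  pg_all[THEN conjunct2, THEN conjunct2, THEN conjunct2, THEN conjunct2, THEN conjunct1]

lemma P_ph: "(f,U) \<in> P \<Longrightarrow> partial_homeo f U"
  using pg_parts(1) by (auto simp: Ball_def)
lemma P_open: "(f,U) \<in> P \<Longrightarrow> open U"
  using P_ph unfolding partial_homeo_def by blast
lemma P_openim: "(f,U) \<in> P \<Longrightarrow> open (f ` U)"
  using P_ph unfolding partial_homeo_def by blast
lemma P_inj: "(f,U) \<in> P \<Longrightarrow> inj_on f U"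
  using P_ph unfolding partial_homeo_def by blast
lemma P_cont: "(f,U) \<in> P \<Longrightarrow> continuous_on U f"
  using P_ph unfolding partial_homeo_def by blast
lemma P_id: "(id, UNIV) \<in> P"
  using pg_parts(2) .
lemma P_restr: "(f,U) \<in> P \<Longrightarrow> open V \<Longrightarrow> V \<subseteq> U \<Longrightarrow> (f,V) \<in> P"
  using pg_parts(3) by simp
lemma P_comp: "(f,U) \<in> P \<Longrightarrow> (g,V) \<in> P \<Longrightarrow> (g \<circ> f, U \<inter> f -` V) \<in> P"
  using pg_parts(4) by simp
lemma P_inv: "(f,U) \<in> P \<Longrightarrow> (inv_into U f, f ` U) \<in> P"
  using pg_parts(5) by simp

lemma P_ev_dom: "(f,U) \<in> P \<Longrightarrow> x \<in> U \<Longrightarrow> \<forall>\<^sub>F z in nhds x. z \<in> U"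
  by (rule ev_nhds_open[of U]) (auto dest: P_open)
lemma P_ev_invf: "(f,U) \<in> P \<Longrightarrow> x \<in> U \<Longrightarrow> \<forall>\<^sub>F z in nhds x. inv_into U f (f z) = z"
  by (rule ev_nhds_open[of U]) (auto dest: P_open P_inj simp: inv_into_f_f)
lemma P_ev_finv: "(f,U) \<in> P \<Longrightarrow> x \<in> U \<Longrightarrow> \<forall>\<^sub>F z in nhds (f x). f (inv_into U f z) = z"
  by (rule ev_nhds_open[of "f ` U"]) (auto dest: P_openim simp: f_inv_into_f)
lemma P_evc: "(r,R) \<in> P \<Longrightarrow> x \<in> R \<Longrightarrow> \<forall>\<^sub>F z in nhds (r x). Q z \<Longrightarrow> \<forall>\<^sub>F z in nhds x. Q (r z)"
  by (rule ev_comp[where R=R]) (auto dest: P_open P_cont)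

lemma basic_eq: "{germ_of f x | x. x \<in> U} = germ_of f ` U" by auto

lemma topspace_gt[simp]: "topspace (germ_top P) = germs P"
  unfolding germ_top_def germs_def by (auto simp: topology_generated_by_topspace)

lemma basic_open: "(f,U) \<in> P \<Longrightarrow> openin (germ_top P) (germ_of f ` U)"
  unfolding germ_top_def by (rule topology_generated_by_Basis) (auto simp: basic_eq)

lemma germsI: "(f,U) \<in> P \<Longrightarrow> x \<in> U \<Longrightarrow> germ_of f x \<in> germs P"
  unfolding germs_def by blast

lemma germsE: "g \<in> germs P \<Longrightarrow> (\<And>f U x. (f,U) \<in> P \<Longrightarrow> x \<in> U \<Longrightarrow> g = germ_of f x \<Longrightarrow> thesis) \<Longrightarrow> thesis"
  unfolding germs_def by blast

lemma openin_gt_iff: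
  "openin (germ_top P) Ob \<longleftrightarrow> Ob \<subseteq> germs P \<and>
     (\<forall>g\<in>Ob. \<exists>f U x. (f,U) \<in> P \<and> x \<in> U \<and> g = germ_of f x \<and> germ_of f ` U \<subseteq> Ob)"
proof
  assume "openin (germ_top P) Ob"
  hence gen: "generate_topology_on {{germ_of f x | x. x \<in> U} | f U. (f,U) \<in> P} Ob"
    unfolding germ_top_def by (simp add: openin_topology_generated_by_iff)
  have sub: "Ob \<subseteq> germs P" using openin_subset[OF \<open>openin (germ_top P) Ob\<close>] by simp
  have "\<forall>g\<in>Ob. \<exists>f U x. (f,U) \<in> P \<and> x \<in> U \<and> g = germ_of f x \<and> germ_of f ` U \<subseteq> Ob"
    using gen
  proof (induction rule: generate_topology_on.induct)
    case Empty then show ?case by simp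
  next
    case (Int a b)
    show ?case
    proof
      fix g assume "g \<in> a \<inter> b"
      then obtain f1 U1 x1 where 1: "(f1,U1) \<in> P" "x1 \<in> U1" "g = germ_of f1 x1" "germ_of f1 ` U1 \<subseteq> a"
        using Int.IH(1) by (meson IntD1)
      obtain f2 U2 x2 where 2: "(f2,U2) \<in> P" "x2 \<in> U2" "g = germ_of f2 x2" "germ_of f2 ` U2 \<subseteq> b"
        using Int.IH(2) \<open>g \<in> a \<inter> b\<close> by (meson IntD2)
      have "x1 = x2 \<and> (\<forall>\<^sub>F z in nhds x1. f1 z = f2 z)" using 1(3) 2(3) germ_of_eq_iff by metis
      hence x: "x1 = x2" and ev: "\<forall>\<^sub>F z in nhds x1. f1 z = f2 z" by auto
      obtain V where V: "open V" "x1 \<in> V" "\<forall>z\<in>V. f1 z = f2 z" using ev eventually_nhds by blast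
      let ?W = "U1 \<inter> U2 \<inter> V"
      have "open ?W" using V 1 2 P_open by blast
      hence "(f1, ?W) \<in> P" using P_restr[OF 1(1)] by blast
      moreover have "germ_of f1 ` ?W \<subseteq> a \<inter> b"
      proof
        fix h assume "h \<in> germ_of f1 ` ?W"
        then obtain z where z: "z \<in> ?W" "h = germ_of f1 z" by blast
        have "germ_of f1 z = germ_of f2 z" using V z by (intro germ_eqI ev_nhds_open[of V]) auto
        thus "h \<in> a \<inter> b" using z 1 2 by auto
      qed
      ultimately show "\<exists>f U x. (f,U) \<in> P \<and> x \<in> U \<and> g = germ_of f x \<and> germ_of f ` U \<subseteq> a \<inter> b"
        using 1 2 V x by blast
    qed
  next
    case (UN K)
    show ?case
    proof
      fix g assume "g \<in> \<Union>K"
      then obtain k where k: "k \<in> K" "g \<in> k" by blast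
      then obtain f U x where "(f,U) \<in> P" "x \<in> U" "g = germ_of f x" "germ_of f ` U \<subseteq> k"
        using UN.IH by meson
      thus "\<exists>f U x. (f,U) \<in> P \<and> x \<in> U \<and> g = germ_of f x \<and> germ_of f ` U \<subseteq> \<Union>K"
        using k by blast
    qed
  next
    case (Basis s)
    then obtain f U where s: "s = germ_of f ` U" "(f,U) \<in> P" by (auto simp: basic_eq)
    show ?case unfolding s(1) using s(2) by blast
  qed
  thus "Ob \<subseteq> germs P \<and> (\<forall>g\<in>Ob. \<exists>f U x. (f,U) \<in> P \<and> x \<in> U \<and> g = germ_of f x \<and> germ_of f ` U \<subseteq> Ob)"
    using sub by blast
next
  assume h: "Ob \<subseteq> germs P \<and> (\<forall>g\<in>Ob. \<exists>f U x. (f,U) \<in> P \<and> x \<in> U \<and> g = germ_of f x \<and> germ_of f ` U \<subseteq> Ob)"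
  have "Ob = \<Union>{germ_of f ` U | f U. (f,U) \<in> P \<and> germ_of f ` U \<subseteq> Ob}"
  proof
    show "Ob \<subseteq> \<Union>{germ_of f ` U | f U. (f,U) \<in> P \<and> germ_of f ` U \<subseteq> Ob}"
    proof
      fix g assume "g \<in> Ob"
      then obtain f U x where "(f,U) \<in> P" "x \<in> U" "g = germ_of f x" "germ_of f ` U \<subseteq> Ob" using h by metis
      thus "g \<in> \<Union>{germ_of f ` U | f U. (f,U) \<in> P \<and> germ_of f ` U \<subseteq> Ob}" by blast
    qed
  qed blast
  moreover have "openin (germ_top P) (\<Union>{germ_of f ` U | f U. (f,U) \<in> P \<and> germ_of f ` U \<subseteq> Ob})"
    by (rule openin_Union) (auto intro: basic_open)
  ultimately show "openin (germ_top P) Ob" by simp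
qed

lemma openin_gtI:
  assumes "Ob \<subseteq> germs P"
    and "\<And>f U x. (f,U) \<in> P \<Longrightarrow> x \<in> U \<Longrightarrow> germ_of f x \<in> Ob \<Longrightarrow> \<exists>V. open V \<and> x \<in> V \<and> (\<forall>z\<in>V \<inter> U. germ_of f z \<in> Ob)"
  shows "openin (germ_top P) Ob"
  unfolding openin_gt_iff
proof (intro conjI ballI assms(1))
  fix g assume "g \<in> Ob"
  then obtain f U x where fU: "(f,U) \<in> P" "x \<in> U" "g = germ_of f x" using assms(1) germsE by blast
  then obtain V where V: "open V" "x \<in> V" "\<forall>z\<in>V \<inter> U. germ_of f z \<in> Ob"
    using assms(2)[OF fU(1,2)] \<open>g \<in> Ob\<close> by auto
  have "(f, V \<inter> U) \<in> P" using P_restr[OF fU(1)] V(1) P_open[OF fU(1)] by auto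
  thus "\<exists>f U x. (f,U) \<in> P \<and> x \<in> U \<and> g = germ_of f x \<and> germ_of f ` U \<subseteq> Ob"
    using V fU by (intro exI[of _ f] exI[of _ "V \<inter> U"] exI[of _ x]) auto
qed

lemma openin_gtD:
  assumes "openin (germ_top P) Ob" "(f,U) \<in> P" "x \<in> U" "germ_of f x \<in> Ob"
  shows "\<forall>\<^sub>F z in nhds x. germ_of f z \<in> Ob"
proof -
  have "\<forall>g\<in>Ob. \<exists>f U x. (f,U) \<in> P \<and> x \<in> U \<and> g = germ_of f x \<and> germ_of f ` U \<subseteq> Ob"
    using assms(1) unfolding openin_gt_iff by (elim conjE)
  then obtain f' U' x' where 1: "(f',U') \<in> P" "x' \<in> U'" "germ_of f x = germ_of f' x'" "germ_of f' ` U' \<subseteq> Ob"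
    using assms(4) by meson
  have "x = x' \<and> (\<forall>\<^sub>F z in nhds x. f z = f' z)" using 1(3) germ_of_eq_iff by metis
  hence "x' = x" and ev: "\<forall>\<^sub>F z in nhds x. f z = f' z" by auto
  obtain V where V: "open V" "x \<in> V" "\<forall>z\<in>V. f z = f' z" using ev eventually_nhds by blast
  show ?thesis
  proof (rule ev_nhds_open[of "V \<inter> U'"])
    show "open (V \<inter> U')" using V(1) P_open[OF 1(1)] by auto
    show "x \<in> V \<inter> U'" using V(2) 1(2) \<open>x' = x\<close> by auto
    fix z assume z: "z \<in> V \<inter> U'"
    have "germ_of f z = germ_of f' z" using V z by (intro germ_eqI ev_nhds_open[of V]) auto
    thus "germ_of f z \<in> Ob" using 1 z by auto
  qed
qed

lemma cont_germ_of:
  assumes "(F,W) \<in> P"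
  shows "continuous_map (top_of_set W) (germ_top P) (germ_of F)"
  unfolding continuous_map
proof (intro conjI allI impI)
  show "germ_of F ` topspace (top_of_set W) \<subseteq> topspace (germ_top P)"
    using assms germsI by auto
  fix Ob assume Ob: "openin (germ_top P) Ob"
  have "open {x \<in> W. germ_of F x \<in> Ob}"
  proof (subst open_subopen, intro ballI)
    fix x assume "x \<in> {x \<in> W. germ_of F x \<in> Ob}"
    hence "\<forall>\<^sub>F z in nhds x. germ_of F z \<in> Ob" "\<forall>\<^sub>F z in nhds x. z \<in> W"
      using openin_gtD[OF Ob assms] P_ev_dom[OF assms] by auto
    hence "\<forall>\<^sub>F z in nhds x. germ_of F z \<in> Ob \<and> z \<in> W" by (rule eventually_conj)
    then obtain T where "open T" "x \<in> T" "\<forall>z\<in>T. germ_of F z \<in> Ob \<and> z \<in> W" using eventually_nhds by blast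
    thus "\<exists>T. open T \<and> x \<in> T \<and> T \<subseteq> {x \<in> W. germ_of F x \<in> Ob}" by blast
  qed
  thus "openin (top_of_set W) {x \<in> topspace (top_of_set W). germ_of F x \<in> Ob}"
    by (simp add: openin_open) (rule exI[of _ "{x \<in> W. germ_of F x \<in> Ob}"], auto)
qed

lemma cont_src: "continuous_map (germ_top P) euclidean gsrc"
  unfolding continuous_map
proof (intro conjI allI impI)
  show "gsrc ` topspace (germ_top P) \<subseteq> topspace euclidean" by simp
  fix Ob :: "'a set" assume "openin euclidean Ob"
  hence Ob: "open Ob" by simp
  show "openin (germ_top P) {x \<in> topspace (germ_top P). gsrc x \<in> Ob}"
    by (rule openin_gtI) (use Ob in \<open>auto intro: germsI\<close>)
qed

lemma cont_tgt: "continuous_map (germ_top P) euclidean gtgt"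
  unfolding continuous_map
proof (intro conjI allI impI)
  show "gtgt ` topspace (germ_top P) \<subseteq> topspace euclidean" by simp
  fix Ob :: "'a set" assume "openin euclidean Ob"
  hence Ob: "open Ob" by simp
  show "openin (germ_top P) {x \<in> topspace (germ_top P). gtgt x \<in> Ob}"
  proof (rule openin_gtI)
    fix f U x assume fU: "(f,U) \<in> P" "x \<in> U" "germ_of f x \<in> {x \<in> topspace (germ_top P). gtgt x \<in> Ob}"
    have "open (U \<inter> f -` Ob)" using P_cont[OF fU(1)] P_open[OF fU(1)] Ob continuous_open_preimage by blast
    thus "\<exists>V. open V \<and> x \<in> V \<and> (\<forall>z\<in>V \<inter> U. germ_of f z \<in> {x \<in> topspace (germ_top P). gtgt x \<in> Ob})"
      using fU by (intro exI[of _ "U \<inter> f -` Ob"]) (auto intro: germsI)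
  qed auto
qed

end



context pg begin

lemma P_comp2:
  assumes "(r,R) \<in> P" "(f,U) \<in> P" "y \<in> R" "r y \<in> U"
  shows "\<exists>W. ((\<lambda>w. f (r w)), W) \<in> P \<and> y \<in> W"
proof -
  have "(f \<circ> r, R \<inter> r -` U) \<in> P" using P_comp[OF assms(1,2)] .
  thus ?thesis using assms(3,4) by (intro exI[of _ "R \<inter> r -` U"]) (simp add: comp_def)
qed

lemma P_comp3:
  assumes "(r,R) \<in> P" "(f,U) \<in> P" "(b,Ub) \<in> P" "y \<in> R" "r y \<in> U" "f (r y) \<in> Ub"
  shows "\<exists>W. ((\<lambda>w. b (f (r w))), W) \<in> P \<and> y \<in> W"
proof -
  obtain W where W: "((\<lambda>w. f (r w)), W) \<in> P" "y \<in> W" using P_comp2[OF assms(1,2,4,5)] by blast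
  show ?thesis using P_comp2[OF W(1) assms(3) W(2)] assms(6) by simp
qed

lemma germ_ev_comp:
  assumes "germ_of f x = germ_of g x" "(r,R) \<in> P" "y \<in> R" "r y = x"
  shows "germ_of (\<lambda>w. h (f (r w))) y = germ_of (\<lambda>w. h (g (r w))) y"
proof -
  have "\<forall>\<^sub>F z in nhds (r y). f z = g z" using germ_eqD[OF assms(1)] assms(4) by simp
  hence "\<forall>\<^sub>F z in nhds y. f (r z) = g (r z)" using P_evc[OF assms(2,3)] by blast
  thus ?thesis by (intro germ_eqI) (auto elim: eventually_mono)
qed

definition cj :: "('a \<Rightarrow> 'a) \<Rightarrow> 'a set \<Rightarrow> ('a \<Rightarrow> 'a) \<Rightarrow> 'a germ \<Rightarrow> 'a germ" where
  "cj a Ua b g = germ_of (\<lambda>w. b ((SOME h. h \<in> snd g) (inv_into Ua a w))) (a (gsrc g))"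

definition cdom :: "'a set \<Rightarrow> 'a set \<Rightarrow> 'a germ set" where
  "cdom Ua Ub = {g \<in> germs P. gsrc g \<in> Ua \<and> gtgt g \<in> Ub}"

lemma cj_germ:
  assumes "(a,Ua) \<in> P" "x \<in> Ua"
  shows "cj a Ua b (germ_of f x) = germ_of (\<lambda>w. b (f (inv_into Ua a w))) (a x)"
proof -
  have inv: "(inv_into Ua a, a ` Ua) \<in> P" using P_inv[OF assms(1)] .
  have ax: "inv_into Ua a (a x) = x" using P_inj[OF assms(1)] assms(2) by (simp add: inv_into_f_f)
  show ?thesis unfolding cj_def gsrc_germ
    by (rule germ_ev_comp[OF germ_some inv _ ax]) (use assms(2) in auto)
qed

lemma cj_fun_P:
  assumes "(a,Ua) \<in> P" "(b,Ub) \<in> P" "(f,U) \<in> P" "x \<in> Ua" "x \<in> U" "f x \<in> Ub"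
  shows "\<exists>W. ((\<lambda>w. b (f (inv_into Ua a w))), W) \<in> P \<and> a x \<in> W"
proof -
  have inv: "(inv_into Ua a, a ` Ua) \<in> P" using P_inv[OF assms(1)] .
  have ax: "inv_into Ua a (a x) = x" using P_inj[OF assms(1)] assms(4) by (simp add: inv_into_f_f)
  show ?thesis by (rule P_comp3[OF inv assms(3,2)]) (use assms ax in auto)
qed

lemma cj_germs:
  assumes "(a,Ua) \<in> P" "(b,Ub) \<in> P" "g \<in> cdom Ua Ub"
  shows "cj a Ua b g \<in> germs P"
proof -
  obtain f U x where fU: "(f,U) \<in> P" "x \<in> U" "g = germ_of f x" using assms(3) unfolding cdom_def
    by (blast elim: germsE)
  have "x \<in> Ua" "f x \<in> Ub" using assms(3) fU unfolding cdom_def by auto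
  then obtain W where "((\<lambda>w. b (f (inv_into Ua a w))), W) \<in> P" "a x \<in> W"
    using cj_fun_P[OF assms(1,2) fU(1)] fU(2) by blast
  thus ?thesis using fU(3) cj_germ[OF assms(1) \<open>x \<in> Ua\<close>] germsI by auto
qed

lemma cdom_open:
  assumes "open Ua" "open Ub"
  shows "openin (germ_top P) (cdom Ua Ub)"
proof -
  have "cdom Ua Ub = {g \<in> topspace (germ_top P). gsrc g \<in> Ua} \<inter> {g \<in> topspace (germ_top P). gtgt g \<in> Ub}"
    unfolding cdom_def by auto
  moreover have "openin (germ_top P) {g \<in> topspace (germ_top P). gsrc g \<in> Ua}"
    using cont_src assms(1) unfolding continuous_map by auto
  moreover have "openin (germ_top P) {g \<in> topspace (germ_top P). gtgt g \<in> Ub}"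
    using cont_tgt assms(2) unfolding continuous_map by auto
  ultimately show ?thesis by auto
qed

lemma cj_cont:
  assumes a: "(a,Ua) \<in> P" and b: "(b,Ub) \<in> P"
  shows "continuous_map (subtopology (germ_top P) (cdom Ua Ub)) (germ_top P) (cj a Ua b)"
  unfolding continuous_map
proof (intro conjI allI impI)
  show "cj a Ua b ` topspace (subtopology (germ_top P) (cdom Ua Ub)) \<subseteq> topspace (germ_top P)"
    using cj_germs[OF a b] by auto
  fix Ob assume Ob: "openin (germ_top P) Ob"
  have "openin (germ_top P) {g \<in> cdom Ua Ub. cj a Ua b g \<in> Ob}"
  proof (rule openin_gtI)
    show "{g \<in> cdom Ua Ub. cj a Ua b g \<in> Ob} \<subseteq> germs P" unfolding cdom_def by auto
    fix f U x assume fU: "(f,U) \<in> P" "x \<in> U" and gin: "germ_of f x \<in> {g \<in> cdom Ua Ub. cj a Ua b g \<in> Ob}"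
    have xa: "x \<in> Ua" and fxb: "f x \<in> Ub" using gin unfolding cdom_def by auto
    define c where "c = (\<lambda>w. b (f (inv_into Ua a w)))"
    obtain Wc where Wc: "(c, Wc) \<in> P" "a x \<in> Wc" using cj_fun_P[OF a b fU(1) xa fU(2) fxb] unfolding c_def by blast
    have cx: "germ_of c (a x) \<in> Ob" using gin cj_germ[OF a xa] unfolding c_def by auto
    have e1: "\<forall>\<^sub>F z in nhds (a x). germ_of c z \<in> Ob" using openin_gtD[OF Ob Wc cx] .
    have e2: "\<forall>\<^sub>F z in nhds x. germ_of c (a z) \<in> Ob" using P_evc[OF a xa e1] .
    have e3: "\<forall>\<^sub>F z in nhds x. z \<in> Ua" using P_ev_dom[OF a xa] .
    have e4: "\<forall>\<^sub>F z in nhds x. f z \<in> Ub" using P_evc[OF fU P_ev_dom[OF b fxb]] .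
    have "\<forall>\<^sub>F z in nhds x. germ_of c (a z) \<in> Ob \<and> z \<in> Ua \<and> f z \<in> Ub"
      using e2 e3 e4 by (auto elim: eventually_elim2 intro: eventually_conj)
    then obtain V where V: "open V" "x \<in> V" "\<forall>z\<in>V. germ_of c (a z) \<in> Ob \<and> z \<in> Ua \<and> f z \<in> Ub"
      using eventually_nhds by blast
    have "\<forall>z\<in>V \<inter> U. germ_of f z \<in> {g \<in> cdom Ua Ub. cj a Ua b g \<in> Ob}"
    proof
      fix z assume z: "z \<in> V \<inter> U"
      have "cj a Ua b (germ_of f z) = germ_of c (a z)" using cj_germ[OF a, of z b f] V z unfolding c_def by auto
      thus "germ_of f z \<in> {g \<in> cdom Ua Ub. cj a Ua b g \<in> Ob}"
        using V z germsI[OF fU(1)] unfolding cdom_def by auto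
    qed
    thus "\<exists>V. open V \<and> x \<in> V \<and> (\<forall>z\<in>V \<inter> U. germ_of f z \<in> {g \<in> cdom Ua Ub. cj a Ua b g \<in> Ob})"
      using V(1,2) by blast
  qed
  moreover have "{x \<in> topspace (subtopology (germ_top P) (cdom Ua Ub)). cj a Ua b x \<in> Ob}
     = cdom Ua Ub \<inter> {g \<in> cdom Ua Ub. cj a Ua b g \<in> Ob}"
    unfolding cdom_def by auto
  ultimately show "openin (subtopology (germ_top P) (cdom Ua Ub)) {x \<in> topspace (subtopology (germ_top P) (cdom Ua Ub)). cj a Ua b x \<in> Ob}"
    by (simp add: openin_subtopology_Int2)
qed

end



context pg begin

lemma gmulI:
  assumes "(f,U) \<in> P" "(k,V) \<in> P" "x \<in> V" "k x \<in> U" "germ_of f (k x) \<in> A" "germ_of k x \<in> B"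
    "germ_of H x = germ_of (\<lambda>w. f (k w)) x"
  shows "germ_of H x \<in> gmul P A B"
proof -
  have "germ_of (f \<circ> k) x \<in> gmul P A B" unfolding gmul_def using assms(1-6) by blast
  thus ?thesis using assms(7) by (simp add: comp_def)
qed

lemma gmulE:
  assumes "e \<in> gmul P A B"
  obtains f U k V x where "(f,U) \<in> P" "(k,V) \<in> P" "x \<in> V" "k x \<in> U" "germ_of f (k x) \<in> A"
    "germ_of k x \<in> B" "e = germ_of (\<lambda>w. f (k w)) x"
  using assms unfolding gmul_def by (auto simp: comp_def)

lemma gpow_rep: "e \<in> gpow P A m \<Longrightarrow> \<exists>F W x. (F,W) \<in> P \<and> x \<in> W \<and> e = germ_of F x"
proof (induction m arbitrary: e)
  case 0 thus ?case using P_id by auto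
next
  case (Suc m)
  from Suc.prems obtain f U k V x where h: "(f,U) \<in> P" "(k,V) \<in> P" "x \<in> V" "k x \<in> U"
    "e = germ_of (\<lambda>w. f (k w)) x" by (auto elim: gmulE)
  obtain W where "((\<lambda>w. f (k w)), W) \<in> P" "x \<in> W" using P_comp2[OF h(2,1,3,4)] by blast
  thus ?case using h(5) by blast
qed

lemma gpow_append:
  assumes "e \<in> gpow P A m" "e = germ_of F y" "(r,R) \<in> P" "x \<in> R" "r x = y" "germ_of r x \<in> A"
  shows "germ_of (\<lambda>w. F (r w)) x \<in> gpow P A (Suc m)"
  using assms
proof (induction m arbitrary: e F y r R x)
  case 0
  then obtain z where "germ_of F y = germ_of id z" by auto
  hence ev: "\<forall>\<^sub>F w in nhds y. F w = w" unfolding germ_of_eq_iff by (elim conjE) simp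
  have ge: "germ_of F y = germ_of (\<lambda>u. u) y" using germ_eqI[OF ev] .
  have "germ_of (\<lambda>w. F (r w)) x = germ_of (\<lambda>w. id (r w)) x"
    using germ_ev_comp[OF ge 0(3,4,5), of "\<lambda>u. u"] by (simp add: id_def)
  also have "\<dots> = germ_of (\<lambda>w. r (id w)) x" by simp
  finally have "germ_of (\<lambda>w. F (r w)) x \<in> gmul P A (gpow P A 0)"
    by (intro gmulI[OF 0(3) P_id]) (use 0 in auto)
  thus ?case by simp
next
  case (Suc m)
  from Suc.prems(1) obtain f U k V z where h: "(f,U) \<in> P" "(k,V) \<in> P" "z \<in> V" "k z \<in> U"
    "germ_of f (k z) \<in> A" "germ_of k z \<in> gpow P A m" "e = germ_of (\<lambda>w. f (k w)) z"
    by (auto elim: gmulE)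
  have "germ_of F y = germ_of (\<lambda>w. f (k w)) z" using h(7) Suc.prems(2) by simp
  hence zy: "z = y" and ev: "\<forall>\<^sub>F w in nhds y. F w = f (k w)" unfolding germ_of_eq_iff by auto
  have IH: "germ_of (\<lambda>w. k (r w)) x \<in> gpow P A (Suc m)"
    using Suc.IH[OF h(6) refl Suc.prems(3,4)] Suc.prems zy by simp
  obtain W where W: "((\<lambda>w. k (r w)), W) \<in> P" "x \<in> W" using P_comp2[OF Suc.prems(3) h(2) Suc.prems(4)] Suc.prems(5) zy h(3) by auto
  have "germ_of (\<lambda>w. F (r w)) x = germ_of (\<lambda>w. f (k (r w))) x"
    using germ_ev_comp[of F y "\<lambda>w. f (k w)" r R x "\<lambda>u. u"] germ_eqI[OF ev] Suc.prems by simp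
  hence "germ_of (\<lambda>w. F (r w)) x \<in> gmul P A (gpow P A (Suc m))"
    by (intro gmulI[OF h(1) W(1) W(2)]) (use h Suc.prems zy IH in auto)
  thus ?case by simp
qed

lemma inv_unique:
  assumes "(F,W) \<in> P" "x \<in> W" "(H,N) \<in> P" "F x \<in> N" "H (F x) = x"
    "\<forall>\<^sub>F w in nhds (F x). F (H w) = w"
  shows "germ_of (inv_into W F) (F x) = germ_of H (F x)"
proof -
  have "\<forall>\<^sub>F w in nhds (H (F x)). w \<in> W" using P_ev_dom[OF assms(1,2)] assms(5) by simp
  hence e1: "\<forall>\<^sub>F w in nhds (F x). H w \<in> W" using P_evc[OF assms(3,4)] by blast
  have "\<forall>\<^sub>F w in nhds (F x). inv_into W F w = H w"
    using e1 assms(6)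
  proof eventually_elim
    case (elim w)
    have "inv_into W F w = inv_into W F (F (H w))" using elim by simp
    also have "\<dots> = H w" using P_inj[OF assms(1)] elim by (intro inv_into_f_f) auto
    finally show ?case .
  qed
  thus ?thesis by (rule germ_eqI)
qed

lemma ginvI:
  assumes "(F,W) \<in> P" "x \<in> W" "germ_of F x \<in> A" "germ_of H (F x) = germ_of (inv_into W F) (F x)"
  shows "germ_of H (F x) \<in> ginv P A"
  unfolding ginv_def using assms by auto

end




locale fac = pg P for P :: "(('a::metric_space \<Rightarrow> 'a) \<times> 'a set) set" +
  fixes S0 :: "'a germ set" and I :: "'i set" and k :: "'i \<Rightarrow> 'a \<Rightarrow> 'a"
    and Uk Ck Ok :: "'i \<Rightarrow> 'a set" and S' :: "'a germ set"
  assumes S0g: "S0 \<subseteq> germs P"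
    and kP: "i \<in> I \<Longrightarrow> (k i, Uk i) \<in> P"
    and OC: "i \<in> I \<Longrightarrow> Ok i \<subseteq> Ck i" and CU: "i \<in> I \<Longrightarrow> Ck i \<subseteq> Uk i"
    and covs: "s \<in> S0 \<Longrightarrow> \<exists>i\<in>I. gsrc s \<in> Ok i"
    and covt: "s \<in> S0 \<Longrightarrow> \<exists>i\<in>I. gtgt s \<in> Ok i"
    and TS: "i \<in> I \<Longrightarrow> j \<in> I \<Longrightarrow> cj (k i) (Uk i) (k j) ` (S0 \<inter> {g. gsrc g \<in> Ck i \<and> gtgt g \<in> Ck j}) \<subseteq> S'"
begin

lemma OU: "i \<in> I \<Longrightarrow> x \<in> Ok i \<Longrightarrow> x \<in> Uk i" using OC CU by blast

lemma single:
  assumes a: "a \<in> S0 \<union> ginv P S0" and ij: "i \<in> I" "j \<in> I" and sa: "gsrc a \<in> Ok i" and ta: "gtgt a \<in> Ok j"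
  shows "cj (k i) (Uk i) (k j) a \<in> S' \<union> ginv P S'"
proof (cases "a \<in> S0")
  case True
  thus ?thesis using TS[OF ij] sa ta OC[OF ij(1)] OC[OF ij(2)] by blast
next
  case False
  with a obtain f U y where fU: "(f,U) \<in> P" "y \<in> U" "germ_of f y \<in> S0" "a = germ_of (inv_into U f) (f y)"
    unfolding ginv_def by blast
  have fy: "f y \<in> Ok i" using sa fU by simp
  have yj: "y \<in> Ok j" using ta fU P_inj[OF fU(1)] by (simp add: inv_into_f_f)
  define ii where "ii = inv_into (Uk i) (k i)"
  define ij' where "ij' = inv_into (Uk j) (k j)"
  define Phi where "Phi = (\<lambda>w. k i (f (ij' w)))"
  define H where "H = (\<lambda>w. k j (inv_into U f (ii w)))"
  have kiP: "(k i, Uk i) \<in> P" and kjP: "(k j, Uk j) \<in> P" using kP ij by auto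
  have yUj: "y \<in> Uk j" and fyUi: "f y \<in> Uk i" using OU ij fy yj by auto
  have t: "cj (k j) (Uk j) (k i) (germ_of f y) \<in> S'"
    using TS[OF ij(2) ij(1)] fU(3) yj fy OC ij by fastforce
  have tg: "cj (k j) (Uk j) (k i) (germ_of f y) = germ_of Phi (k j y)"
    unfolding Phi_def ij'_def using cj_germ[OF kjP yUj] .
  obtain WP where WP: "(Phi, WP) \<in> P" "k j y \<in> WP"
    using cj_fun_P[OF kjP kiP fU(1) yUj fU(2) fyUi] unfolding Phi_def ij'_def by blast
  have ijy: "ij' (k j y) = y" unfolding ij'_def using P_inj[OF kjP] yUj by (simp add: inv_into_f_f)
  have iiy: "ii (k i (f y)) = f y" unfolding ii_def using P_inj[OF kiP] fyUi by (simp add: inv_into_f_f)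
  have Phiy: "Phi (k j y) = k i (f y)" unfolding Phi_def using ijy by simp
  have invfU: "(inv_into U f, f ` U) \<in> P" using P_inv[OF fU(1)] .
  have iiP: "(ii, k i ` Uk i) \<in> P" unfolding ii_def using P_inv[OF kiP] .
  have fyy: "inv_into U f (f y) = y" using P_inj[OF fU(1)] fU(2) by (simp add: inv_into_f_f)
  obtain N where N: "(H, N) \<in> P" "k i (f y) \<in> N"
    using P_comp3[OF iiP invfU kjP, of "k i (f y)"] fyUi iiy fU(2) fyy yUj unfolding H_def by auto
  have Hy: "H (k i (f y)) = k j y" unfolding H_def using iiy fyy by simp
  have cja: "cj (k i) (Uk i) (k j) a = germ_of H (k i (f y))"
    unfolding fU(4) H_def ii_def using cj_germ[OF kiP fyUi] .
  have E1: "\<forall>\<^sub>F w in nhds (k i (f y)). w \<in> k i ` Uk i" using P_ev_dom[OF iiP] fyUi by blast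
  have "\<forall>\<^sub>F z in nhds (ii (k i (f y))). z \<in> f ` U" unfolding iiy
    by (rule ev_nhds_open[OF P_openim[OF fU(1)]]) (use fU(2) in auto)
  hence E2: "\<forall>\<^sub>F w in nhds (k i (f y)). ii w \<in> f ` U" using P_evc[OF iiP] fyUi by blast
  obtain W2 where W2: "((\<lambda>w. inv_into U f (ii w)), W2) \<in> P" "k i (f y) \<in> W2"
    using P_comp2[OF iiP invfU, of "k i (f y)"] fyUi iiy fU(2) by auto
  have "\<forall>\<^sub>F z in nhds ((\<lambda>w. inv_into U f (ii w)) (k i (f y))). z \<in> Uk j"
    using P_ev_dom[OF kjP yUj] by (simp add: iiy fyy)
  hence E3: "\<forall>\<^sub>F w in nhds (k i (f y)). inv_into U f (ii w) \<in> Uk j" using P_evc[OF W2] by blast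
  have ev: "\<forall>\<^sub>F w in nhds (Phi (k j y)). Phi (H w) = w"
    unfolding Phiy using E1 E2 E3
  proof eventually_elim
    case (elim w)
    have "ij' (k j (inv_into U f (ii w))) = inv_into U f (ii w)"
      unfolding ij'_def using P_inj[OF kjP] elim by (intro inv_into_f_f) auto
    moreover have "f (inv_into U f (ii w)) = ii w" using elim by (simp add: f_inv_into_f)
    moreover have "k i (ii w) = w" unfolding ii_def using elim by (simp add: f_inv_into_f)
    ultimately show ?case unfolding Phi_def H_def by simp
  qed
  have "germ_of (inv_into WP Phi) (Phi (k j y)) = germ_of H (Phi (k j y))"
    by (rule inv_unique[OF WP N(1)]) (use N Hy Phiy ev in auto)
  hence "germ_of H (Phi (k j y)) \<in> ginv P S'"
    by (intro ginvI[OF WP]) (use t tg in auto)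
  thus ?thesis using cja Phiy by simp
qed


lemma A_src:
  assumes "a \<in> S0 \<union> ginv P S0" shows "\<exists>i\<in>I. gsrc a \<in> Ok i"
proof (cases "a \<in> S0")
  case True thus ?thesis using covs by blast
next
  case False
  with assms obtain f U y where fU: "(f,U) \<in> P" "y \<in> U" "germ_of f y \<in> S0" "a = germ_of (inv_into U f) (f y)"
    unfolding ginv_def by blast
  show ?thesis using covt[OF fU(3)] fU(4) by simp
qed

lemma factor:
  assumes "e \<in> gpow P (S0 \<union> ginv P S0) (Suc m)" "i \<in> I" "j \<in> I" "gsrc e \<in> Ok i" "gtgt e \<in> Ok j"
  shows "cj (k i) (Uk i) (k j) e \<in> gpow P (S' \<union> ginv P S') (Suc m)"
  using assms
proof (induction m arbitrary: e j)
  case 0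
  have e0: "e \<in> gmul P (S0 \<union> ginv P S0) (gpow P (S0 \<union> ginv P S0) 0)" using 0(1) by simp
  from e0 obtain f U kk V x where h: "(f,U) \<in> P" "(kk,V) \<in> P" "x \<in> V" "kk x \<in> U"
    "germ_of f (kk x) \<in> S0 \<union> ginv P S0" "germ_of kk x \<in> gpow P (S0 \<union> ginv P S0) 0" "e = germ_of (\<lambda>w. f (kk w)) x"
    by (rule gmulE)
  from h(6) obtain z where "germ_of kk x = germ_of (\<lambda>u. u) z" by (auto simp: id_def)
  hence ev: "\<forall>\<^sub>F w in nhds x. kk w = w" unfolding germ_of_eq_iff by (elim conjE) simp
  have kkx: "kk x = x" using ev_nhds_point[OF ev] .
  have "germ_of (\<lambda>w. f (kk w)) x = germ_of f x" by (rule germ_eqI) (use ev in \<open>auto elim: eventually_mono\<close>)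
  hence e: "e = germ_of f x" using h(7) by simp
  have eA: "e \<in> S0 \<union> ginv P S0" using h(5) kkx e by simp
  have s1: "cj (k i) (Uk i) (k j) e \<in> S' \<union> ginv P S'" using single[OF eA 0(2,3,4,5)] .
  have xi: "x \<in> Uk i" using OU 0 e by auto
  have fxj: "f x \<in> Uk j" using OU 0 e by auto
  have kiP: "(k i, Uk i) \<in> P" "(k j, Uk j) \<in> P" using kP 0 by auto
  obtain Wc where Wc: "((\<lambda>w. k j (f (inv_into (Uk i) (k i) w))), Wc) \<in> P" "k i x \<in> Wc"
    using cj_fun_P[OF kiP h(1) xi _ fxj] h(4) kkx by auto
  have cje: "cj (k i) (Uk i) (k j) e = germ_of (\<lambda>w. k j (f (inv_into (Uk i) (k i) w))) (k i x)"
    using e cj_germ[OF kiP(1) xi] by simp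
  have "germ_of (\<lambda>w. k j (f (inv_into (Uk i) (k i) w))) (k i x)
        \<in> gmul P (S' \<union> ginv P S') (gpow P (S' \<union> ginv P S') 0)"
    by (rule gmulI[OF Wc(1) P_id]) (use s1 cje Wc in \<open>auto simp: id_def\<close>)
  thus ?case using cje by simp
next
  case (Suc m)
  have e0: "e \<in> gmul P (S0 \<union> ginv P S0) (gpow P (S0 \<union> ginv P S0) (Suc m))" using Suc.prems(1) by simp
  from e0 obtain f U kk V x where h: "(f,U) \<in> P" "(kk,V) \<in> P" "x \<in> V" "kk x \<in> U"
    "germ_of f (kk x) \<in> S0 \<union> ginv P S0" "germ_of kk x \<in> gpow P (S0 \<union> ginv P S0) (Suc m)"
    "e = germ_of (\<lambda>w. f (kk w)) x"
    by (rule gmulE)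
  obtain l where l: "l \<in> I" "kk x \<in> Ok l" using A_src[OF h(5)] by auto
  have xi: "x \<in> Ok i" using Suc.prems h by simp
  have fj: "f (kk x) \<in> Ok j" using Suc.prems h by simp
  have IH: "cj (k i) (Uk i) (k l) (germ_of kk x) \<in> gpow P (S' \<union> ginv P S') (Suc m)"
    using Suc.IH[OF h(6) Suc.prems(2) l(1)] xi l by simp
  have s1: "cj (k l) (Uk l) (k j) (germ_of f (kk x)) \<in> S' \<union> ginv P S'"
    using single[OF h(5) l(1) Suc.prems(3)] l fj by simp
  have kiP: "(k i, Uk i) \<in> P" "(k j, Uk j) \<in> P" "(k l, Uk l) \<in> P" using kP Suc.prems l by auto
  have xUi: "x \<in> Uk i" using OU Suc.prems(2) xi by blast
  have zUl: "kk x \<in> Uk l" using OU l by blast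
  have fzUj: "f (kk x) \<in> Uk j" using OU Suc.prems(3) fj by blast
  define ii where "ii = inv_into (Uk i) (k i)"
  define il where "il = inv_into (Uk l) (k l)"
  define \<alpha> where "\<alpha> = (\<lambda>v. k j (f (il v)))"
  define \<beta> where "\<beta> = (\<lambda>w. k l (kk (ii w)))"
  obtain W\<alpha> where W\<alpha>: "(\<alpha>, W\<alpha>) \<in> P" "k l (kk x) \<in> W\<alpha>"
    using cj_fun_P[OF kiP(3) kiP(2) h(1) zUl h(4) fzUj] unfolding \<alpha>_def il_def by blast
  obtain W\<beta> where W\<beta>: "(\<beta>, W\<beta>) \<in> P" "k i x \<in> W\<beta>"
    using cj_fun_P[OF kiP(1) kiP(3) h(2) xUi h(3) zUl] unfolding \<beta>_def ii_def by blast
  have iix: "ii (k i x) = x" unfolding ii_def using P_inj[OF kiP(1)] xUi by (simp add: inv_into_f_f)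
  have b1: "\<beta> (k i x) = k l (kk x)" unfolding \<beta>_def using iix by simp
  have ca: "germ_of \<alpha> (\<beta> (k i x)) = cj (k l) (Uk l) (k j) (germ_of f (kk x))"
    unfolding b1 \<alpha>_def il_def using cj_germ[OF kiP(3) zUl] by simp
  have cb: "germ_of \<beta> (k i x) = cj (k i) (Uk i) (k l) (germ_of kk x)"
    unfolding \<beta>_def ii_def using cj_germ[OF kiP(1) xUi] by simp
  have cje: "cj (k i) (Uk i) (k j) e = germ_of (\<lambda>w. k j (f (kk (ii w)))) (k i x)"
    using h(7) cj_germ[OF kiP(1) xUi] unfolding ii_def by simp
  obtain W2 where W2: "((\<lambda>w. kk (ii w)), W2) \<in> P" "k i x \<in> W2"
    using P_comp2[OF P_inv[OF kiP(1)] h(2), of "k i x"] xUi iix h(3) unfolding ii_def by auto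
  have "\<forall>\<^sub>F u in nhds ((\<lambda>w. kk (ii w)) (k i x)). u \<in> Uk l"
    using P_ev_dom[OF kiP(3) zUl] by (simp add: iix)
  hence E: "\<forall>\<^sub>F w in nhds (k i x). kk (ii w) \<in> Uk l" using P_evc[OF W2] by blast
  have eq: "germ_of (\<lambda>w. k j (f (kk (ii w)))) (k i x) = germ_of (\<lambda>w. \<alpha> (\<beta> w)) (k i x)"
  proof (rule germ_eqI)
    show "\<forall>\<^sub>F w in nhds (k i x). k j (f (kk (ii w))) = \<alpha> (\<beta> w)"
      using E
    proof eventually_elim
      case (elim w)
      have "il (k l (kk (ii w))) = kk (ii w)" unfolding il_def using P_inj[OF kiP(3)] elim
        by (intro inv_into_f_f) auto
      thus ?case unfolding \<alpha>_def \<beta>_def by simp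
    qed
  qed
  have "germ_of (\<lambda>w. k j (f (kk (ii w)))) (k i x) \<in> gmul P (S' \<union> ginv P S') (gpow P (S' \<union> ginv P S') (Suc m))"
    by (rule gmulI[OF W\<alpha>(1) W\<beta>(1) W\<beta>(2)]) (use b1 W\<alpha>(2) ca cb s1 IH eq in auto)
  thus ?case using cje by simp
qed

end



context pg begin

lemma chart:
  assumes lc: "locally_compact_space (euclidean :: 'a topology)" and V: "open V"
    and tr: "\<exists>g\<in>germs P. gsrc g = x \<and> gtgt g \<in> V"
  shows "\<exists>f U Oo C. (f,U) \<in> P \<and> open Oo \<and> compact C \<and> x \<in> Oo \<and> Oo \<subseteq> C \<and> C \<subseteq> U \<and> f ` U \<subseteq> V"
proof -
  from tr obtain g where g: "g \<in> germs P" "gsrc g = x" "gtgt g \<in> V" by blast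
  then obtain f U0 x' where fU: "(f,U0) \<in> P" "x' \<in> U0" "g = germ_of f x'" by (blast elim: germsE)
  have x': "x' = x" and fx: "f x \<in> V" using g fU by auto
  define U1 where "U1 = U0 \<inter> f -` V"
  have oU1: "open U1" unfolding U1_def using P_cont[OF fU(1)] P_open[OF fU(1)] V continuous_open_preimage by blast
  have U1P: "(f,U1) \<in> P" using P_restr[OF fU(1) oU1] unfolding U1_def by auto
  have xU1: "x \<in> U1" using fU(2) x' fx unfolding U1_def by auto
  have nb: "neighbourhood_base_of (compactin euclidean) (euclidean :: 'a topology)"
    using locally_compact_space_neighbourhood_base[of "euclidean :: 'a topology"] lc by simp
  then obtain Oo C where OC: "openin euclidean Oo" "compactin euclidean C" "x \<in> Oo" "Oo \<subseteq> C" "C \<subseteq> U1"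
    unfolding neighbourhood_base_of using oU1 xU1 by (meson open_openin)
  have "f ` U1 \<subseteq> V" unfolding U1_def by auto
  thus ?thesis using OC U1P by (intro exI[of _ f] exI[of _ U1] exI[of _ Oo] exI[of _ C]) auto
qed

lemma closed_srctgt:
  assumes "closed Ca" "closed Cb"
  shows "closedin (germ_top P) {g \<in> germs P. gsrc g \<in> Ca \<and> gtgt g \<in> Cb}"
proof -
  have "closedin (germ_top P) {g \<in> topspace (germ_top P). gsrc g \<in> Ca}"
    by (rule closedin_continuous_map_preimage[OF cont_src]) (use assms in simp)
  moreover have "closedin (germ_top P) {g \<in> topspace (germ_top P). gtgt g \<in> Cb}"
    by (rule closedin_continuous_map_preimage[OF cont_tgt]) (use assms in simp)
  ultimately have "closedin (germ_top P) ({g \<in> topspace (germ_top P). gsrc g \<in> Ca} \<inter> {g \<in> topspace (germ_top P). gtgt g \<in> Cb})"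
    by (rule closedin_Int)
  moreover have "{g \<in> topspace (germ_top P). gsrc g \<in> Ca} \<inter> {g \<in> topspace (germ_top P). gtgt g \<in> Cb}
     = {g \<in> germs P. gsrc g \<in> Ca \<and> gtgt g \<in> Cb}" by auto
  ultimately show ?thesis by simp
qed

lemma TT_compact:
  assumes S0: "compactin (germ_top P) S0" and a: "(a,Ua) \<in> P" and b: "(b,Ub) \<in> P"
    and Ca: "compact Ca" "Ca \<subseteq> Ua" and Cb: "compact Cb" "Cb \<subseteq> Ub"
  shows "compactin (germ_top P) (cj a Ua b ` (S0 \<inter> {g. gsrc g \<in> Ca \<and> gtgt g \<in> Cb}))"
proof -
  have S0g: "S0 \<subseteq> germs P" using compactin_subset_topspace[OF S0] by simp
  have eq: "S0 \<inter> {g. gsrc g \<in> Ca \<and> gtgt g \<in> Cb} = S0 \<inter> {g \<in> germs P. gsrc g \<in> Ca \<and> gtgt g \<in> Cb}"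
    using S0g by auto
  have K: "compactin (germ_top P) (S0 \<inter> {g. gsrc g \<in> Ca \<and> gtgt g \<in> Cb})"
    unfolding eq by (rule compact_Int_closedin[OF S0 closed_srctgt]) (use Ca Cb compact_imp_closed in auto)
  have "S0 \<inter> {g. gsrc g \<in> Ca \<and> gtgt g \<in> Cb} \<subseteq> cdom Ua Ub" unfolding cdom_def using S0g Ca Cb by auto
  hence "compactin (subtopology (germ_top P) (cdom Ua Ub)) (S0 \<inter> {g. gsrc g \<in> Ca \<and> gtgt g \<in> Cb})"
    using K by (simp add: compactin_subtopology)
  thus ?thesis using image_compactin cj_cont[OF a b] by blast
qed

lemma RR_compact:
  assumes "(F,W) \<in> P" "compact K" "K \<subseteq> W"
  shows "compactin (germ_top P) (germ_of F ` K)"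
proof -
  have "compactin (top_of_set W) K" using assms by (simp add: compactin_subtopology)
  thus ?thesis using image_compactin cont_germ_of[OF assms(1)] by blast
qed

end



lemma compactin_UN_finite:
  "finite I \<Longrightarrow> (\<And>i. i \<in> I \<Longrightarrow> compactin X (F i)) \<Longrightarrow> compactin X (\<Union>i\<in>I. F i)"
  by (rule compactin_Union) auto

locale main = pg P for P :: "(('a::metric_space \<Rightarrow> 'a) \<times> 'a set) set" +
  fixes S0 :: "'a germ set" and Y X VX VY :: "'a set"
    and kf lf :: "'a \<Rightarrow> 'a \<Rightarrow> 'a" and Uf Of Cf Ul Ol Cl :: "'a \<Rightarrow> 'a set" and I J :: "'a set"
  assumes S0c: "compactin (germ_top P) S0"
    and VYY: "VY \<subseteq> Y" and VXX: "VX \<subseteq> X" and Xc: "compact X"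
    and NB: "\<forall>g\<in>restr P Y. \<exists>n. \<exists>W. openin (subtopology (germ_top P) (restr P Y)) W \<and> g \<in> W
          \<and> W \<subseteq> (\<Union>k\<in>{1..n}. gpow P (S0 \<union> ginv P S0) k)"
    and kch: "\<And>x. (kf x, Uf x) \<in> P \<and> open (Of x) \<and> compact (Cf x) \<and> x \<in> Of x \<and> Of x \<subseteq> Cf x \<and> Cf x \<subseteq> Uf x \<and> kf x ` Uf x \<subseteq> VX"
    and lch: "\<And>x. (lf x, Ul x) \<in> P \<and> open (Ol x) \<and> compact (Cl x) \<and> x \<in> Ol x \<and> Ol x \<subseteq> Cl x \<and> Cl x \<subseteq> Ul x \<and> lf x ` Ul x \<subseteq> VY"
    and Ifin: "finite I" and Icov: "Y \<union> gsrc ` S0 \<union> gtgt ` S0 \<subseteq> (\<Union>i\<in>I. Of i)"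
    and Jfin: "finite J" and Jcov: "X \<subseteq> (\<Union>j\<in>J. Ol j)"
begin

definition "TT = (\<Union>i\<in>I. \<Union>j\<in>I. cj (kf i) (Uf i) (kf j) ` (S0 \<inter> {g. gsrc g \<in> Cf i \<and> gtgt g \<in> Cf j}))"
definition "RR = (\<Union>i\<in>I. \<Union>j\<in>J. germ_of (\<lambda>w. kf i (lf j w)) ` {x \<in> Cl j \<inter> X. lf j x \<in> Cf i})"
definition "S' = TT \<union> RR"

lemma S0g: "S0 \<subseteq> germs P" using compactin_subset_topspace[OF S0c] by simp

lemma kP: "(kf i, Uf i) \<in> P" using kch by blast
lemma lP: "(lf j, Ul j) \<in> P" using lch by blast

lemma kl_P: "((\<lambda>w. kf i (lf j w)), Ul j \<inter> lf j -` Uf i) \<in> P"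
  using P_comp[OF lP[of j] kP[of i]] by (simp add: comp_def)

lemma RR_cpt: "compactin (germ_top P) RR"
  unfolding RR_def
proof (intro compactin_UN_finite Ifin Jfin)
  fix i j
  have cl: "closed (Cl j \<inter> lf j -` Cf i)"
    by (rule continuous_closed_preimage) (use lch kch P_cont[OF lP, of j] in \<open>auto intro: continuous_on_subset compact_imp_closed\<close>)
  have eq: "{x \<in> Cl j \<inter> X. lf j x \<in> Cf i} = Cl j \<inter> ((Cl j \<inter> lf j -` Cf i) \<inter> X)" by auto
  have "compact {x \<in> Cl j \<inter> X. lf j x \<in> Cf i}" unfolding eq
    by (rule compact_Int_closed) (use lch cl closed_Int[OF cl compact_imp_closed[OF Xc]] in auto)
  moreover have "{x \<in> Cl j \<inter> X. lf j x \<in> Cf i} \<subseteq> Ul j \<inter> lf j -` Uf i" using lch kch by blast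
  ultimately show "compactin (germ_top P) (germ_of (\<lambda>w. kf i (lf j w)) ` {x \<in> Cl j \<inter> X. lf j x \<in> Cf i})"
    using RR_compact[OF kl_P] by blast
qed

lemma TT_cpt: "compactin (germ_top P) TT"
  unfolding TT_def
proof (intro compactin_UN_finite Ifin)
  fix i j
  show "compactin (germ_top P) (cj (kf i) (Uf i) (kf j) ` (S0 \<inter> {g. gsrc g \<in> Cf i \<and> gtgt g \<in> Cf j}))"
    by (rule TT_compact[OF S0c kP kP]) (use kch in auto)
qed

lemma S'_cpt: "compactin (germ_top P) S'"
  unfolding S'_def using TT_cpt RR_cpt by (rule compactin_Un)

lemma TT_sub: "TT \<subseteq> restr P X"
proof
  fix c assume "c \<in> TT"
  then obtain i j s where s: "s \<in> S0" "gsrc s \<in> Cf i" "gtgt s \<in> Cf j" "c = cj (kf i) (Uf i) (kf j) s"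
    unfolding TT_def by blast
  obtain f U x where fU: "(f,U) \<in> P" "x \<in> U" "s = germ_of f x" using S0g s(1) by (blast elim: germsE)
  have xi: "x \<in> Uf i" and fxj: "f x \<in> Uf j" using s fU kch by auto
  have "s \<in> cdom (Uf i) (Uf j)" unfolding cdom_def using S0g s(1) xi fxj fU by auto
  hence cg: "c \<in> germs P" using cj_germs[OF kP kP] s(4) by blast
  have ce: "c = germ_of (\<lambda>w. kf j (f (inv_into (Uf i) (kf i) w))) (kf i x)"
    using s(4) fU(3) cj_germ[OF kP xi] by simp
  have "inv_into (Uf i) (kf i) (kf i x) = x" using P_inj[OF kP] xi by (simp add: inv_into_f_f)
  hence "gsrc c = kf i x" "gtgt c = kf j (f x)" using ce by auto
  moreover have "kf i x \<in> VX" "kf j (f x) \<in> VX" using kch xi fxj by blast+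
  ultimately show "c \<in> restr P X" unfolding restr_def using cg VXX by auto
qed

lemma RR_sub: "RR \<subseteq> restr P X"
proof
  fix c assume "c \<in> RR"
  then obtain i j x where x: "x \<in> Cl j" "x \<in> X" "lf j x \<in> Cf i" "c = germ_of (\<lambda>w. kf i (lf j w)) x"
    unfolding RR_def by blast
  have xU: "x \<in> Ul j \<inter> lf j -` Uf i" using x lch kch by blast
  have "c \<in> germs P" using germsI[OF kl_P xU] x(4) by simp
  moreover have "kf i (lf j x) \<in> VX" using kch xU by blast
  ultimately show "c \<in> restr P X" unfolding restr_def using x VXX by auto
qed

lemma S'_sub: "S' \<subseteq> restr P X" unfolding S'_def using TT_sub RR_sub by blast

lemma fac_inst: "fac P S0 I kf Uf Cf Of S'"
proof (unfold_locales)
  show "S0 \<subseteq> germs P" by (rule S0g)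
  show "\<And>i. i \<in> I \<Longrightarrow> (kf i, Uf i) \<in> P" using kP .
  show "\<And>i. i \<in> I \<Longrightarrow> Of i \<subseteq> Cf i" using kch by blast
  show "\<And>i. i \<in> I \<Longrightarrow> Cf i \<subseteq> Uf i" using kch by blast
  show "\<And>s. s \<in> S0 \<Longrightarrow> \<exists>i\<in>I. gsrc s \<in> Of i" using Icov by blast
  show "\<And>s. s \<in> S0 \<Longrightarrow> \<exists>i\<in>I. gtgt s \<in> Of i" using Icov by blast
  show "\<And>i j. i \<in> I \<Longrightarrow> j \<in> I \<Longrightarrow> cj (kf i) (Uf i) (kf j) ` (S0 \<inter> {g. gsrc g \<in> Cf i \<and> gtgt g \<in> Cf j}) \<subseteq> S'"
    unfolding S'_def TT_def by blast
qed

end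



context main begin

interpretation Fa: fac P S0 I kf Uf Cf Of S' by (rule fac_inst)

lemma Ol_Cl: "Ol j \<subseteq> Cl j" using lch by blast
lemma Cl_Ul: "Cl j \<subseteq> Ul j" using lch by blast
lemma Ol_Ul: "Ol j \<subseteq> Ul j" using lch by blast
lemma lf_VY: "x \<in> Ul j \<Longrightarrow> lf j x \<in> VY" using lch by blast
lemma Of_Cf: "Of j \<subseteq> Cf j" using kch by blast
lemma Cf_Uf: "Cf j \<subseteq> Uf j" using kch by blast
lemma Of_Uf: "Of j \<subseteq> Uf j" using kch by blast
lemma kf_VX: "x \<in> Uf j \<Longrightarrow> kf j x \<in> VX" using kch by blast
lemmas lchX = Ol_Cl Cl_Ul Ol_Ul lf_VY
lemmas kchX = Of_Cf Cf_Uf Of_Uf kf_VX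

lemma nbhd:
  assumes g: "g \<in> restr P X"
  shows "\<exists>n W. openin (subtopology (germ_top P) (restr P X)) W \<and> g \<in> W
          \<and> W \<subseteq> (\<Union>k\<in>{1..n}. gpow P (S' \<union> ginv P S') k)"
proof -
  from g have gg: "g \<in> germs P" and gX: "gsrc g \<in> X" "gtgt g \<in> X" unfolding restr_def by auto
  obtain f U x where fU: "(f,U) \<in> P" "x \<in> U" "g = germ_of f x" using gg by (blast elim: germsE)
  have xX: "x \<in> X" and fxX: "f x \<in> X" using gX fU by auto
  obtain j where j: "j \<in> J" "x \<in> Ol j" using Jcov xX by blast
  obtain j' where j': "j' \<in> J" "f x \<in> Ol j'" using Jcov fxX by blast
  define Psi where "Psi = cj (lf j) (Ul j) (lf j')"
  have lemY: "Psi g' \<in> restr P Y" if g': "g' \<in> germs P" "gsrc g' \<in> Ol j" "gtgt g' \<in> Ol j'" for g'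
  proof -
    obtain f' U' x' where f'U': "(f',U') \<in> P" "x' \<in> U'" "g' = germ_of f' x'" using g'(1) by (blast elim: germsE)
    have x'U: "x' \<in> Ul j" "f' x' \<in> Ul j'" using g'(2,3) f'U'(3) Ol_Ul by auto
    have "g' \<in> cdom (Ul j) (Ul j')" unfolding cdom_def using g' x'U f'U' by auto
    hence "Psi g' \<in> germs P" unfolding Psi_def using cj_germs[OF lP lP] by blast
    moreover have "Psi g' = germ_of (\<lambda>w. lf j' (f' (inv_into (Ul j) (lf j) w))) (lf j x')"
      unfolding Psi_def f'U'(3) using cj_germ[OF lP x'U(1)] .
    moreover have "inv_into (Ul j) (lf j) (lf j x') = x'" using P_inj[OF lP] x'U by (simp add: inv_into_f_f)
    moreover have "lf j x' \<in> VY" "lf j' (f' x') \<in> VY" using lf_VY x'U by auto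
    ultimately show ?thesis unfolding restr_def using VYY by auto
  qed
  have hY: "Psi g \<in> restr P Y" using lemY[OF gg] fU j j' by simp
  obtain n W where W: "openin (subtopology (germ_top P) (restr P Y)) W" "Psi g \<in> W"
    "W \<subseteq> (\<Union>k\<in>{1..n}. gpow P (S0 \<union> ginv P S0) k)" using NB hY by blast
  obtain W' where W': "openin (germ_top P) W'" "W = W' \<inter> restr P Y" using W(1) unfolding openin_subtopology by auto
  have oUl: "open (Ul j)" "open (Ul j')" using P_open[OF lP] by auto
  have "openin (subtopology (germ_top P) (cdom (Ul j) (Ul j')))
          {g' \<in> topspace (subtopology (germ_top P) (cdom (Ul j) (Ul j'))). Psi g' \<in> W'}"
    using cj_cont[OF lP[of j] lP[of j']] W'(1) unfolding continuous_map Psi_def by simp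
  hence o1: "openin (germ_top P) {g' \<in> topspace (subtopology (germ_top P) (cdom (Ul j) (Ul j'))). Psi g' \<in> W'}"
    using openin_trans_full[OF _ cdom_open[OF oUl]] by simp
  define N where "N = {g' \<in> topspace (subtopology (germ_top P) (cdom (Ul j) (Ul j'))). Psi g' \<in> W'} \<inter> cdom (Ol j) (Ol j')"
  have oN: "openin (germ_top P) N" unfolding N_def
    using openin_Int[OF o1 cdom_open[of "Ol j" "Ol j'"]] lch by simp
  define Wr where "Wr = restr P X \<inter> N"
  have oWr: "openin (subtopology (germ_top P) (restr P X)) Wr"
    unfolding Wr_def using openin_subtopology_Int2[OF oN] .
  have gWr: "g \<in> Wr"
  proof -
    have "g \<in> cdom (Ul j) (Ul j')" "g \<in> cdom (Ol j) (Ol j')" unfolding cdom_def using gg fU j j' Ol_Ul by auto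
    moreover have "Psi g \<in> W'" using W(2) W'(2) by simp
    ultimately show ?thesis unfolding Wr_def N_def using g gg by simp
  qed
  have sub: "Wr \<subseteq> (\<Union>k\<in>{1..n+2}. gpow P (S' \<union> ginv P S') k)"
  proof
    fix g' assume g'W: "g' \<in> Wr"
    hence g'g: "g' \<in> germs P" and g'X: "gsrc g' \<in> X" "gtgt g' \<in> X" and g'O: "gsrc g' \<in> Ol j" "gtgt g' \<in> Ol j'"
      and g'W': "Psi g' \<in> W'"
      unfolding Wr_def N_def restr_def cdom_def by auto
    obtain f' U' x' where f'U': "(f',U') \<in> P" "x' \<in> U'" "g' = germ_of f' x'" using g'g by (blast elim: germsE)
    have x'X: "x' \<in> X" "f' x' \<in> X" and x'O: "x' \<in> Ol j" "f' x' \<in> Ol j'" using g'X g'O f'U' by auto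
    have x'U: "x' \<in> Ul j" "f' x' \<in> Ul j'" "x' \<in> Cl j" "f' x' \<in> Cl j'" using x'O lchX by blast+
    define il where "il = inv_into (Ul j) (lf j)"
    define E where "E = (\<lambda>w. lf j' (f' (il w)))"
    have ilx: "il (lf j x') = x'" unfolding il_def using P_inj[OF lP] x'U by (simp add: inv_into_f_f)
    have eE: "Psi g' = germ_of E (lf j x')" unfolding Psi_def f'U'(3) E_def il_def using cj_germ[OF lP x'U(1)] .
    have eY: "Psi g' \<in> restr P Y" using lemY[OF g'g g'O] .
    hence "Psi g' \<in> W" using W' g'W' by auto
    then obtain kk where kk: "kk \<in> {1..n}" "Psi g' \<in> gpow P (S0 \<union> ginv P S0) kk" using W(3) by blast
    then obtain m where m: "kk = Suc m" by (cases kk) auto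
    have lY: "lf j x' \<in> Y" "lf j' (f' x') \<in> Y" using lchX x'U VYY by blast+
    obtain i where i: "i \<in> I" "lf j x' \<in> Of i" using Icov lY by blast
    obtain i' where i': "i' \<in> I" "lf j' (f' x') \<in> Of i'" using Icov lY by blast
    have Ex: "E (lf j x') = lf j' (f' x')" unfolding E_def using ilx by simp
    have fct: "cj (kf i) (Uf i) (kf i') (Psi g') \<in> gpow P (S' \<union> ginv P S') (Suc m)"
      by (rule Fa.factor) (use kk m i i' eE Ex in auto)
    have lUf: "lf j x' \<in> Uf i" "lf j' (f' x') \<in> Uf i'" "lf j x' \<in> Cf i" "lf j' (f' x') \<in> Cf i'" using i i' kchX by blast+
    obtain WE where WE: "(E, WE) \<in> P" "lf j x' \<in> WE"
      using cj_fun_P[OF lP lP f'U'(1) x'U(1) f'U'(2) x'U(2)] unfolding E_def il_def by blast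
    define ii where "ii = inv_into (Uf i) (kf i)"
    define \<Gamma> where "\<Gamma> = (\<lambda>w. kf i' (E (ii w)))"
    have cG: "cj (kf i) (Uf i) (kf i') (Psi g') = germ_of \<Gamma> (kf i (lf j x'))"
      unfolding eE \<Gamma>_def ii_def using cj_germ[OF kP lUf(1)] .
    have iil: "ii (kf i (lf j x')) = lf j x'" unfolding ii_def using P_inj[OF kP] lUf by (simp add: inv_into_f_f)
    define r where "r = (\<lambda>w. kf i (lf j w))"
    have rP: "(r, Ul j \<inter> lf j -` Uf i) \<in> P" unfolding r_def using kl_P .
    have x'r: "x' \<in> Ul j \<inter> lf j -` Uf i" using x'U lUf by auto
    have rA: "germ_of r x' \<in> S' \<union> ginv P S'"
      unfolding S'_def RR_def r_def using i(1) j(1) x'U(3) x'X(1) lUf(3) by blast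
    have app: "germ_of (\<lambda>w. \<Gamma> (r w)) x' \<in> gpow P (S' \<union> ginv P S') (Suc (Suc m))"
      by (rule gpow_append[OF fct cG rP x'r]) (use rA in \<open>auto simp: r_def\<close>)
    define \<rho> where "\<rho> = (\<lambda>w. kf i' (lf j' w))"
    define R\<rho> where "R\<rho> = Ul j' \<inter> lf j' -` Uf i'"
    have \<rho>P: "(\<rho>, R\<rho>) \<in> P" unfolding \<rho>_def R\<rho>_def using kl_P .
    have fxR: "f' x' \<in> R\<rho>" unfolding R\<rho>_def using x'U lUf by auto
    have \<rho>A: "germ_of \<rho> (f' x') \<in> S'"
      unfolding S'_def RR_def \<rho>_def using i'(1) j'(1) x'U(4) x'X(2) lUf(4) by blast
    have invA: "germ_of (inv_into R\<rho> \<rho>) (\<rho> (f' x')) \<in> S' \<union> ginv P S'"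
      using ginvI[OF \<rho>P fxR \<rho>A refl] by blast
    have Gr: "\<Gamma> (r x') = \<rho> (f' x')" unfolding \<Gamma>_def r_def \<rho>_def using iil Ex by simp
    obtain W\<Gamma> where W\<Gamma>: "(\<Gamma>, W\<Gamma>) \<in> P" "kf i (lf j x') \<in> W\<Gamma>"
      using cj_fun_P[OF kP kP WE(1) lUf(1) WE(2)] Ex lUf(2) unfolding \<Gamma>_def ii_def by auto
    obtain WGr where WGr: "((\<lambda>w. \<Gamma> (r w)), WGr) \<in> P" "x' \<in> WGr"
      using P_comp2[OF rP W\<Gamma>(1) x'r] W\<Gamma>(2) unfolding r_def by auto
    have e1: "\<forall>\<^sub>F w in nhds x'. w \<in> Ul j" using P_ev_dom[OF lP x'U(1)] .
    have e2: "\<forall>\<^sub>F w in nhds x'. lf j w \<in> Uf i" using P_evc[OF lP x'U(1) P_ev_dom[OF kP lUf(1)]] .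
    have e3: "\<forall>\<^sub>F w in nhds x'. f' w \<in> R\<rho>" using P_evc[OF f'U'(1,2) P_ev_dom[OF \<rho>P fxR]] .
    have eq: "germ_of f' x' = germ_of (\<lambda>w. inv_into R\<rho> \<rho> (\<Gamma> (r w))) x'"
    proof (rule germ_eqI)
      show "\<forall>\<^sub>F w in nhds x'. f' w = inv_into R\<rho> \<rho> (\<Gamma> (r w))"
        using e1 e2 e3
      proof eventually_elim
        case (elim w)
        have a1: "ii (kf i (lf j w)) = lf j w" unfolding ii_def using P_inj[OF kP] elim
          by (intro inv_into_f_f) auto
        have a2: "il (lf j w) = w" unfolding il_def using P_inj[OF lP] elim by (intro inv_into_f_f) auto
        have "\<Gamma> (r w) = \<rho> (f' w)" unfolding \<Gamma>_def r_def \<rho>_def E_def using a1 a2 by simp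
        moreover have "inv_into R\<rho> \<rho> (\<rho> (f' w)) = f' w" using P_inj[OF \<rho>P] elim
          by (intro inv_into_f_f) auto
        ultimately show ?case by simp
      qed
    qed
    have "germ_of f' x' \<in> gmul P (S' \<union> ginv P S') (gpow P (S' \<union> ginv P S') (Suc (Suc m)))"
      by (rule gmulI[OF P_inv[OF \<rho>P] WGr(1) WGr(2)]) (use Gr fxR invA app eq in auto)
    hence "g' \<in> gpow P (S' \<union> ginv P S') (Suc (Suc (Suc m)))" using f'U'(3) by simp
    moreover have "Suc (Suc (Suc m)) \<in> {1..n+2}" using kk m by auto
    ultimately show "g' \<in> (\<Union>k\<in>{1..n+2}. gpow P (S' \<union> ginv P S') k)" by blast
  qed
  show ?thesis using oWr gWr sub by blast
qed

end



lemma choice4: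
  assumes "\<forall>x. \<exists>a b c d. Q x a b c d"
  obtains fa fb fc fd where "\<And>x. Q x (fa x) (fb x) (fc x) (fd x)"
proof -
  have "\<forall>x. \<exists>p. Q x (fst p) (fst (snd p)) (fst (snd (snd p))) (snd (snd (snd p)))"
  proof
    fix x
    obtain a b c d where "Q x a b c d" using assms by blast
    thus "\<exists>p. Q x (fst p) (fst (snd p)) (fst (snd (snd p))) (snd (snd (snd p)))"
      by (intro exI[of _ "(a,b,c,d)"]) simp
  qed
  then obtain f where "\<forall>x. Q x (fst (f x)) (fst (snd (f x))) (fst (snd (snd (f x)))) (snd (snd (snd (f x))))"
    by (rule choice[THEN exE])
  thus ?thesis
    using that[of "\<lambda>x. fst (f x)" "\<lambda>x. fst (snd (f x))" "\<lambda>x. fst (snd (snd (f x)))" "\<lambda>x. snd (snd (snd (f x)))"]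
    by simp
qed

theorem proposition2p3p2:
  fixes P :: "(('a::metric_space \<Rightarrow> 'a) \<times> 'a set) set"
  assumes "locally_compact_space (euclidean :: 'a topology)"
    and "pseudogroup P"
    and "compactly_generated P"
    and "compact X" and "top_transversal P X"
  shows "\<exists>S. S \<subseteq> restr P X \<and> compact_generating_pair P S X"
proof -
  interpret pg P using assms(2) by unfold_locales
  obtain S0 Y where gp: "compact_generating_pair P S0 Y" using assms(3) unfolding compactly_generated_def by blast
  have S0c: "compactin (germ_top P) S0" and Yc: "compact Y" and Ytr: "top_transversal P Y"
    and NB: "\<forall>g\<in>restr P Y. \<exists>n. \<exists>W. openin (subtopology (germ_top P) (restr P Y)) W \<and> g \<in> W
          \<and> W \<subseteq> (\<Union>k\<in>{1..n}. gpow P (S0 \<union> ginv P S0) k)"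
    using gp unfolding compact_generating_pair_def by simp_all
  obtain VY where VY: "open VY" "VY \<subseteq> Y" "\<forall>x. \<exists>g\<in>germs P. gsrc g = x \<and> gtgt g \<in> VY"
    using Ytr unfolding top_transversal_def by blast
  obtain VX where VX: "open VX" "VX \<subseteq> X" "\<forall>x. \<exists>g\<in>germs P. gsrc g = x \<and> gtgt g \<in> VX"
    using assms(5) unfolding top_transversal_def by blast
  have "\<forall>x. \<exists>f U Oo C. (f,U) \<in> P \<and> open Oo \<and> compact C \<and> x \<in> Oo \<and> Oo \<subseteq> C \<and> C \<subseteq> U \<and> f ` U \<subseteq> VX"
  proof
    fix x show "\<exists>f U Oo C. (f,U) \<in> P \<and> open Oo \<and> compact C \<and> x \<in> Oo \<and> Oo \<subseteq> C \<and> C \<subseteq> U \<and> f ` U \<subseteq> VX"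
      by (rule chart[OF assms(1) VX(1) VX(3)[rule_format]])
  qed
  then obtain kf Uf Of Cf where kch: "\<And>x. (kf x, Uf x) \<in> P \<and> open (Of x) \<and> compact (Cf x) \<and> x \<in> Of x \<and> Of x \<subseteq> Cf x \<and> Cf x \<subseteq> Uf x \<and> kf x ` Uf x \<subseteq> VX"
    by (rule choice4) blast
  have "\<forall>x. \<exists>f U Oo C. (f,U) \<in> P \<and> open Oo \<and> compact C \<and> x \<in> Oo \<and> Oo \<subseteq> C \<and> C \<subseteq> U \<and> f ` U \<subseteq> VY"
  proof
    fix x show "\<exists>f U Oo C. (f,U) \<in> P \<and> open Oo \<and> compact C \<and> x \<in> Oo \<and> Oo \<subseteq> C \<and> C \<subseteq> U \<and> f ` U \<subseteq> VY"
      by (rule chart[OF assms(1) VY(1) VY(3)[rule_format]])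
  qed
  then obtain lf Ul Ol Cl where lch: "\<And>x. (lf x, Ul x) \<in> P \<and> open (Ol x) \<and> compact (Cl x) \<and> x \<in> Ol x \<and> Ol x \<subseteq> Cl x \<and> Cl x \<subseteq> Ul x \<and> lf x ` Ul x \<subseteq> VY"
    by (rule choice4) blast
  define D where "D = Y \<union> gsrc ` S0 \<union> gtgt ` S0"
  have "compactin euclidean (gsrc ` S0)" using image_compactin[OF S0c cont_src] .
  moreover have "compactin euclidean (gtgt ` S0)" using image_compactin[OF S0c cont_tgt] .
  ultimately have cD: "compact D" unfolding D_def using Yc by (simp add: compact_Un)
  obtain I where I: "I \<subseteq> D" "finite I" "D \<subseteq> (\<Union>i\<in>I. Of i)"
  proof (rule compactE_image[OF cD, of D Of])
    show "\<And>T. T \<in> D \<Longrightarrow> open (Of T)" using kch by blast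
    show "D \<subseteq> (\<Union>c\<in>D. Of c)" using kch by blast
  qed blast
  obtain J where J: "J \<subseteq> X" "finite J" "X \<subseteq> (\<Union>j\<in>J. Ol j)"
  proof (rule compactE_image[OF assms(4), of X Ol])
    show "\<And>T. T \<in> X \<Longrightarrow> open (Ol T)" using lch by blast
    show "X \<subseteq> (\<Union>c\<in>X. Ol c)" using lch by blast
  qed blast
  interpret M: main P S0 Y X VX VY kf lf Uf Of Cf Ul Ol Cl I J
  proof (unfold_locales)
    show "compactin (germ_top P) S0" by (rule S0c)
    show "VY \<subseteq> Y" by (rule VY(2))
    show "VX \<subseteq> X" by (rule VX(2))
    show "compact X" by (rule assms(4))
    show "\<forall>g\<in>restr P Y. \<exists>n W. openin (subtopology (germ_top P) (restr P Y)) W \<and> g \<in> W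
          \<and> W \<subseteq> (\<Union>k\<in>{1..n}. gpow P (S0 \<union> ginv P S0) k)" by (rule NB)
    show "\<And>x. (kf x, Uf x) \<in> P \<and> open (Of x) \<and> compact (Cf x) \<and> x \<in> Of x \<and> Of x \<subseteq> Cf x \<and> Cf x \<subseteq> Uf x \<and> kf x ` Uf x \<subseteq> VX"
      by (rule kch)
    show "\<And>x. (lf x, Ul x) \<in> P \<and> open (Ol x) \<and> compact (Cl x) \<and> x \<in> Ol x \<and> Ol x \<subseteq> Cl x \<and> Cl x \<subseteq> Ul x \<and> lf x ` Ul x \<subseteq> VY"
      by (rule lch)
    show "finite I" by (rule I(2))
    show "Y \<union> gsrc ` S0 \<union> gtgt ` S0 \<subseteq> (\<Union>i\<in>I. Of i)" using I(3) unfolding D_def .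
    show "finite J" by (rule J(2))
    show "X \<subseteq> (\<Union>j\<in>J. Ol j)" by (rule J(3))
  qed
  have "compact_generating_pair P M.S' X"
    unfolding compact_generating_pair_def
  proof (intro conjI)
    show "M.S' \<subseteq> germs P" using M.S'_sub unfolding restr_def by blast
    show "compactin (germ_top P) M.S'" by (rule M.S'_cpt)
    show "compact X" by (rule assms(4))
    show "top_transversal P X" by (rule assms(5))
    show "\<forall>g\<in>restr P X. \<exists>n W. openin (subtopology (germ_top P) (restr P X)) W \<and> g \<in> W
          \<and> W \<subseteq> (\<Union>k\<in>{1..n}. gpow P (M.S' \<union> ginv P M.S') k)"
      using M.nbhd by blast
  qed
  thus ?thesis using M.S'_sub by blast
qed



end
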